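(* Consider the symmetric two-user channel $a=c>0$, $b=d>0$, with $P_{\max}>0$. If $$b\ge\frac{\sqrt{1+aP_{\max}}}{P_{\max}},$$ then operating via TDM is optimal: the convex hull of the power-control rate region equals the triangle with vertices $(0,0)$, $(0,\log_2(1+aP_{\max}))$ and $(\log_2(1+aP_{\max}),0)$.
   Context: This is the two-user interference channel with interference treated as noise. The rates are $R_1(P_1,P_2)=\log_2\!\left(1+\frac{aP_1}{1+bP_2}\right)$ and $R_2(P_1,P_2)=\log_2\!\left(1+\frac{cP_2}{1+dP_1}\right)$, with $P_1,P_2\in[0,P_{\max}]$. The gains are normalized by the noise variance: $a,c$ are direct gains and $b,d$ are interference gains. The power-control rate region is $\{(r_1,r_2)\in\mathbb R^2_{\ge0}: \exists (P_1,P_2)\in[0,P_{\max}]^2,\ r_1\le R_1(P_1,P_2),\ r_2\le R_2(P_1,P_2)\}$. *)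

theory Defs
  imports "HOL-Analysis.Analysis"
begin

text \<open>Rates of the two-user interference channel, interference treated as noise.\<close>
definition R1 :: "real \<Rightarrow> real \<Rightarrow> real \<Rightarrow> real \<Rightarrow> real" where
  "R1 a b P1 P2 = log 2 (1 + a * P1 / (1 + b * P2))"

definition R2 :: "real \<Rightarrow> real \<Rightarrow> real \<Rightarrow> real \<Rightarrow> real" where
  "R2 c d P1 P2 = log 2 (1 + c * P2 / (1 + d * P1))"

definition rate_region :: "real \<Rightarrow> real \<Rightarrow> real \<Rightarrow> real \<Rightarrow> real \<Rightarrow> (real \<times> real) set" where
  "rate_region a b c d Pmax =
     {(r1, r2). r1 \<ge> 0 \<and> r2 \<ge> 0 \<and>
        (\<exists>P1 P2. 0 \<le> P1 \<and> P1 \<le> Pmax \<and> 0 \<le> P2 \<and> P2 \<le> Pmax \<and>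
                 r1 \<le> R1 a b P1 P2 \<and> r2 \<le> R2 c d P1 P2)}"

end

theory Submission
  imports Defs
begin

lemma key_poly:
  fixes a b P x y :: real
  assumes a: "a > 0" and b: "b > 0" and P: "P > 0"
    and c: "b^2 * P^2 \<ge> 1 + a * P"
    and x: "0 \<le> x" "x \<le> P" and y: "0 \<le> y" "y \<le> P"
  shows "(1 + b*y + a*x) * (1 + b*x + a*y) \<le> (1 + a*P) * ((1 + b*y) * (1 + b*x))"
proof -
  define h where "h = P + P*b*(x+y) + P*b^2*x*y - (x+y) - b*(x^2+y^2) - a*x*y"
  have id: "P^2 * h = (P-x)*(P-y)*P + x*y*(P*(P^2*b^2 - 1 - a*P)) + P^2*b*(x*(P-x)+y*(P-y))"
    unfolding h_def by (simp add: algebra_simps power2_eq_square power3_eq_cube)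
  have t1: "(P-x)*(P-y)*P \<ge> 0" using x y P by simp
  have t2: "x*y*(P*(P^2*b^2 - 1 - a*P)) \<ge> 0" using x y P c
    by (intro mult_nonneg_nonneg) (auto simp: algebra_simps)
  have t3: "P^2*b*(x*(P-x)+y*(P-y)) \<ge> 0" using x y P b by simp
  have "P^2 * h \<ge> 0" using id t1 t2 t3 by linarith
  hence "h \<ge> 0" using P by (simp add: zero_le_mult_iff)
  hence "a * h \<ge> 0" using a by simp
  moreover have "(1 + a*P) * ((1 + b*y) * (1 + b*x)) - (1 + b*y + a*x) * (1 + b*x + a*y) = a * h"
    unfolding h_def by (simp add: algebra_simps power2_eq_square)
  ultimately show ?thesis by linarith
qed

lemma sum_rate:
  fixes a b P x y :: real
  assumes a: "a > 0" and b: "b > 0" and P: "P > 0"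
    and c: "b^2 * P^2 \<ge> 1 + a * P"
    and x: "0 \<le> x" "x \<le> P" and y: "0 \<le> y" "y \<le> P"
  shows "R1 a b x y + R2 a b x y \<le> log 2 (1 + a * P)"
proof -
  have py: "1 + b*y > 0" "1 + b*x > 0" using b x y by (auto intro: add_pos_nonneg)
  have e1: "1 + a*x/(1+b*y) = (1 + b*y + a*x)/(1+b*y)" using py by (simp add: field_simps)
  have e2: "1 + a*y/(1+b*x) = (1 + b*x + a*y)/(1+b*x)" using py by (simp add: field_simps)
  have q1: "(1 + b*y + a*x) > 0" "(1 + b*x + a*y) > 0" using a b x y py
    by (auto intro: add_pos_nonneg)
  have "R1 a b x y + R2 a b x y = log 2 ((1 + b*y + a*x)/(1+b*y) * ((1 + b*x + a*y)/(1+b*x)))"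
    unfolding R1_def R2_def e1 e2 using py q1 by (subst log_mult_pos) auto
  also have "\<dots> \<le> log 2 (1 + a * P)"
  proof (rule log_mono)
    show "(1::real) < 2" by simp
    show "0 < (1 + b*y + a*x)/(1+b*y) * ((1 + b*x + a*y)/(1+b*x))" using py q1 by simp
    have kp: "(1 + b*y + a*x) * (1 + b*x + a*y) \<le> (1 + a*P) * ((1 + b*y) * (1 + b*x))"
      by (rule key_poly[OF a b P c x y])
    thus "(1 + b*y + a*x)/(1+b*y) * ((1 + b*x + a*y)/(1+b*x)) \<le> 1 + a*P"
    proof -
      have "(1 + b*y + a*x)/(1+b*y) * ((1 + b*x + a*y)/(1+b*x))
            = ((1 + b*y + a*x) * (1 + b*x + a*y)) / ((1 + b*y) * (1 + b*x))" by simp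
      also have "\<dots> \<le> 1 + a*P" using py kp
        by (subst pos_divide_le_eq) (auto intro: mult_pos_pos)
      finally show ?thesis .
    qed
  qed
  finally show ?thesis .
qed

theorem corollary3:
  fixes a b Pmax :: real
  assumes "a > 0" and "b > 0" and "Pmax > 0"
    and "b \<ge> sqrt (1 + a * Pmax) / Pmax"
  shows "convex hull (rate_region a b a b Pmax) =
         convex hull {(0, 0), (0, log 2 (1 + a * Pmax)), (log 2 (1 + a * Pmax), 0)}"
proof -
  note a = assms(1) and b = assms(2) and P = assms(3)
  define L where "L = log 2 (1 + a * Pmax)"
  have Lpos: "L > 0" unfolding L_def using a P by (subst zero_less_log_cancel_iff) (auto intro: add_pos_pos)
  have s: "sqrt (1 + a*Pmax) \<le> b * Pmax" using assms(4) P by (simp add: field_simps)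
  have c: "b^2 * Pmax^2 \<ge> 1 + a * Pmax"
  proof -
    have nn: "0 \<le> 1 + a*Pmax" using a P by (simp add: add_nonneg_nonneg)
    hence "1 + a*Pmax = (sqrt (1 + a*Pmax))^2" by simp
    also have "\<dots> \<le> (b*Pmax)^2" using s nn by (intro power_mono) auto
    finally show ?thesis by (simp add: power_mult_distrib)
  qed
  define T where "T = {(r1, r2). r1 \<ge> 0 \<and> r2 \<ge> (0::real) \<and> r1 + r2 \<le> L}"
  have sub1: "rate_region a b a b Pmax \<subseteq> T"
  proof
    fix r assume "r \<in> rate_region a b a b Pmax"
    then obtain r1 r2 P1 P2 where r: "r = (r1, r2)" "r1 \<ge> 0" "r2 \<ge> 0"
      "0 \<le> P1" "P1 \<le> Pmax" "0 \<le> P2" "P2 \<le> Pmax"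
      "r1 \<le> R1 a b P1 P2" "r2 \<le> R2 a b P1 P2"
      unfolding rate_region_def by auto
    have "R1 a b P1 P2 + R2 a b P1 P2 \<le> L"
      unfolding L_def by (rule sum_rate[OF a b P c r(4,5,6,7)])
    thus "r \<in> T" using r unfolding T_def by auto
  qed
  have sub2: "T \<subseteq> convex hull {(0, 0), (0, L), (L, 0)}"
  proof
    fix r assume "r \<in> T"
    then obtain r1 r2 where r: "r = (r1, r2)" "r1 \<ge> 0" "r2 \<ge> 0" "r1 + r2 \<le> L"
      unfolding T_def by auto
    let ?u = "1 - (r1 + r2)/L" and ?v = "r2/L" and ?w = "r1/L"
    have "r = ?u *\<^sub>R (0,0) + ?v *\<^sub>R (0, L) + ?w *\<^sub>R (L, 0)"
      using r Lpos by simp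
    moreover have "0 \<le> ?u" "0 \<le> ?v" "0 \<le> ?w" "?u + ?v + ?w = 1"
      using r Lpos by (auto simp: field_simps)
    ultimately show "r \<in> convex hull {(0, 0), (0, L), (L, 0)}"
      unfolding convex_hull_3 by blast
  qed
  have sub3: "{(0, 0), (0, L), (L, 0)} \<subseteq> rate_region a b a b Pmax"
  proof -
    have "(0,0) \<in> rate_region a b a b Pmax"
      unfolding rate_region_def R1_def R2_def using P by (auto intro!: exI[of _ 0])
    moreover have "(0,L) \<in> rate_region a b a b Pmax"
      unfolding rate_region_def R1_def R2_def L_def using P a Lpos[unfolded L_def]
      apply simp apply (rule exI[of _ 0]) apply simp apply (rule exI[of _ Pmax]) by simp
    moreover have "(L,0) \<in> rate_region a b a b Pmax"
      unfolding rate_region_def R1_def R2_def L_def using P a Lpos[unfolded L_def]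
      apply simp apply (rule exI[of _ Pmax]) apply simp apply (rule exI[of _ 0]) by simp
    ultimately show ?thesis by auto
  qed
  have "convex hull (rate_region a b a b Pmax) \<subseteq> convex hull {(0, 0), (0, L), (L, 0)}"
    using sub1 sub2 by (intro hull_minimal) (auto simp: convex_convex_hull)
  moreover have "convex hull {(0, 0), (0, L), (L, 0)} \<subseteq> convex hull (rate_region a b a b Pmax)"
    using sub3 by (rule hull_mono)
  ultimately show ?thesis unfolding L_def by blast
qed

end
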